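(* Let $p=p_1\dots p_r$ and $p'=p'_1\dots p'_r$ be consecutive patterns with $p_1=p'_1$, $p_r=p'_r$ and $\max_i p_i=\max_i p'_i$. Then $p$ is changeable for $p'$ if and only if for every $n$, every $e\in\mathbf{I}_n$, and every occurrence of $p$ in $e$, the change of that occurrence of $p$ into an occurrence of $p'$ is valid.
   Context: An inversion sequence of length $n$ is an integer sequence $e=e_1e_2\dots e_n$ with $0\le e_i<i$ for all $i$; $\mathbf{I}_n$ denotes the set of these. A pattern of length $r$ is a sequence $p=p_1\dots p_r$ with $p_i\in\{0,\dots,r-1\}$ such that whenever a value $j>0$ appears in $p$, the value $j-1$ also appears. The reduction of an integer word $w$ is obtained by replacing every occurrence of the $i$-th smallest distinct value of $w$ by $i-1$. An inversion sequence $e$ has an occurrence of the consecutive pattern $p$ in position $i$ if the reduction of $e_i\dots e_{i+r-1}$ equals $p$. Change: let $d=\max_i p_i=\max_i p'_i$; if $e\in\mathbf{I}_n$ has an occurrence of $p$ in position $i$, let $f:\{0,\dots,d\}\to\{e_i,\dots,e_{i+r-1}\}$ be the order-preserving bijection with $e_{i+t-1}=f(p_t)$ for $1\le t\le r$; the change of this occurrence into an occurrence of $p'$ is the sequence $e'$ with $e'_{i+t-1}=f(p'_t)$ for $1\le t\le r$ and $e'_j=e_j$ for $j<i$ or $j>i+r-1$. The change is valid if $e'\in\mathbf{I}_n$. $p$ is changeable for $p'$ if for all $1\le i\le r$, $p'_i\le\max(\{p_j:1\le j\le i\}\cup\{p_j-j+i: i<j\le r\})$. *)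

theory Defs
  imports Main
begin

text \<open>Sequences are lists, indexed from 0: list entry e ! k corresponds to e_{k+1}.\<close>

definition inv_seq :: "nat \<Rightarrow> nat list \<Rightarrow> bool" where
  "inv_seq n e \<longleftrightarrow> length e = n \<and> (\<forall>k < n. e ! k < k + 1)"

definition is_pattern :: "nat list \<Rightarrow> bool" where
  "is_pattern p \<longleftrightarrow> (\<forall>x \<in> set p. x < length p) \<and>
     (\<forall>j \<in> set p. 0 < j \<longrightarrow> j - 1 \<in> set p)"

definition reduction :: "nat list \<Rightarrow> nat list" where
  "reduction w = map (\<lambda>x. card {y \<in> set w. y < x}) w"

definition occurs_at :: "nat list \<Rightarrow> nat list \<Rightarrow> nat \<Rightarrow> bool" where
  "occurs_at p e i \<longleftrightarrow> i + length p \<le> length e \<and>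
     reduction (take (length p) (drop i e)) = p"

text \<open>The change of the occurrence at position i of p into p'; f is the order-preserving
  bijection from {0..d} onto the set of values of the window.\<close>
definition change :: "nat list \<Rightarrow> nat list \<Rightarrow> nat list \<Rightarrow> nat \<Rightarrow> nat list" where
  "change p p' e i =
     (let w = take (length p) (drop i e);
          f = (\<lambda>k. sorted_list_of_set (set w) ! k)
      in take i e @ map f p' @ drop (i + length p) e)"

definition valid_change :: "nat list \<Rightarrow> nat list \<Rightarrow> nat list \<Rightarrow> nat \<Rightarrow> bool" where
  "valid_change p p' e i \<longleftrightarrow> inv_seq (length e) (change p p' e i)"

definition changeable :: "nat list \<Rightarrow> nat list \<Rightarrow> bool" where
  "changeable p p' \<longleftrightarrow> (\<forall>i < length p.
     int (p' ! i) \<le> Max ({int (p ! j) | j. j \<le> i} \<union>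
                        {int (p ! j) - int j + int i | j. i < j \<and> j < length p}))"

end

theory Submission
  imports Defs
begin

lemma sorted_gap:
  fixes L :: "nat list"
  assumes "sorted_wrt (<) L" "a + k < length L"
  shows "L ! a + k \<le> L ! (a + k)"
  using assms(2)
proof (induction k)
  case 0 then show ?case by simp
next
  case (Suc k)
  have "L ! (a + k) < L ! (a + Suc k)"
    using sorted_wrt_nth_less[OF assms(1), of "a+k" "a + Suc k"] Suc.prems by simp
  with Suc show ?case by simp
qed

lemma sorted_gap2:
  fixes L :: "nat list"
  assumes "sorted_wrt (<) L" "a \<le> b" "b < length L"
  shows "L ! a + (b - a) \<le> L ! b"
  using sorted_gap[OF assms(1), of a "b - a"] assms by simp

lemma sorted_card_less:
  fixes L :: "nat list"
  assumes s: "sorted_wrt (<) L" and k: "k < length L"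
  shows "card {y \<in> set L. y < L ! k} = k"
proof -
  have eq: "{y \<in> set L. y < L ! k} = (\<lambda>m. L ! m) ` {..<k}"
  proof
    show "{y \<in> set L. y < L ! k} \<subseteq> (\<lambda>m. L ! m) ` {..<k}"
    proof
      fix y assume "y \<in> {y \<in> set L. y < L ! k}"
      then obtain m where m: "m < length L" "y = L ! m" "L ! m < L ! k"
        by (auto simp: in_set_conv_nth)
      have "m < k"
      proof (rule ccontr)
        assume "\<not> m < k"
        then have "k \<le> m" by simp
        then have "L ! k \<le> L ! m" using sorted_gap2[OF s, of k m] m by simp
        with m show False by simp
      qed
      with m show "y \<in> (\<lambda>m. L ! m) ` {..<k}" by auto
    qed
  next
    show "(\<lambda>m. L ! m) ` {..<k} \<subseteq> {y \<in> set L. y < L ! k}"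
      using k sorted_wrt_nth_less[OF s] by auto
  qed
  have "inj_on (\<lambda>m. L ! m) {..<k}"
    using k s[unfolded strict_sorted_iff] by (auto simp: inj_on_def nth_eq_iff_index_eq)
  then show ?thesis using eq card_image by fastforce
qed

lemma occ_struct:
  fixes w p :: "nat list"
  assumes red: "reduction w = p" and t: "t < length p"
  defines "L \<equiv> sorted_list_of_set (set w)"
  shows "p ! t < length L \<and> L ! (p ! t) = w ! t"
proof -
  have s: "sorted_wrt (<) L" unfolding L_def by (rule strict_sorted_list_of_set)
  have sL: "set L = set w" unfolding L_def by simp
  have lw: "length w = length p" using arg_cong[OF red, of length] unfolding reduction_def by simp
  have "reduction w ! t = card {y \<in> set w. y < w ! t}"
    using t lw unfolding reduction_def by (simp only: nth_map)
  then have pt: "p ! t = card {y \<in> set w. y < w ! t}" using red by simp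
  have "w ! t \<in> set L" using sL t lw by simp
  then obtain k where k: "k < length L" "L ! k = w ! t" by (auto simp: in_set_conv_nth)
  have "p ! t = k" using pt sorted_card_less[OF s k(1)] k(2) sL by simp
  with k show ?thesis by simp
qed

lemma max_lt_L:
  fixes w p :: "nat list"
  assumes red: "reduction w = p" and ne: "p \<noteq> []"
  shows "Max (set p) < length (sorted_list_of_set (set w))"
proof -
  have "Max (set p) \<in> set p" using ne by simp
  then obtain t where "t < length p" "p ! t = Max (set p)" by (auto simp: in_set_conv_nth)
  then show ?thesis using occ_struct[OF red] by metis
qed

lemma pattern_downclosed:
  assumes "is_pattern p" "p \<noteq> []" "v \<le> Max (set p)"
  shows "v \<in> set p"
  using assms(3)
proof (induction "Max (set p) - v" arbitrary: v)
  case 0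
  then have "v = Max (set p)" by simp
  then show ?case using assms(2) by simp
next
  case (Suc x)
  then have "Suc v \<in> set p" by simp
  then show ?case using assms(1) unfolding is_pattern_def by fastforce
qed


lemma fwd:
  fixes p p' e :: "nat list"
  assumes ch: "changeable p p'" and len: "length p = length p'"
    and mx: "Max (set p) = Max (set p')"
    and inv: "inv_seq n e" and occ: "occurs_at p e i"
  shows "valid_change p p' e i"
proof -
  define r where "r = length p"
  define w where "w = take r (drop i e)"
  define L where "L = sorted_list_of_set (set w)"
  have ir: "i + r \<le> length e" and red: "reduction w = p"
    using occ unfolding occurs_at_def r_def w_def by auto
  have n: "n = length e" and ie: "\<And>k. k < n \<Longrightarrow> e ! k < k + 1"
    using inv unfolding inv_seq_def by auto
  have wj: "\<And>j. j < r \<Longrightarrow> w ! j = e ! (i + j)" using ir unfolding w_def by simp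
  have s: "sorted_wrt (<) L" unfolding L_def by (rule strict_sorted_list_of_set)
  have key: "L ! (p' ! t) \<le> i + t" if t: "t < r" for t
  proof -
    have ne: "p \<noteq> []" using t r_def by auto
    have "p' ! t \<le> Max (set p')" using t len r_def by simp
    then have pL: "p' ! t < length L" using max_lt_L[OF red ne] mx unfolding L_def by simp
    define S where "S = {int (p ! j) | j. j \<le> t} \<union>
                        {int (p ! j) - int j + int t | j. t < j \<and> j < length p}"
    have fin: "finite S" unfolding S_def by auto
    have "int (p ! 0) \<in> S" unfolding S_def by auto
    then have Sne: "S \<noteq> {}" by auto
    have "int (p' ! t) \<le> Max S" using ch t r_def unfolding changeable_def S_def by auto
    then obtain x where x: "x \<in> S" "int (p' ! t) \<le> x" using Max_ge_iff[OF fin Sne] by auto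
    then show ?thesis
    proof (cases "x \<in> {int (p ! j) | j. j \<le> t}")
      case True
      then obtain j where j: "j \<le> t" "x = int (p ! j)" by auto
      have jr: "j < r" using j t by simp
      have os: "p ! j < length L \<and> L ! (p ! j) = w ! j"
        using occ_struct[OF red, of j] jr r_def unfolding L_def by simp
      have "L ! (p' ! t) + (p ! j - p' ! t) \<le> L ! (p ! j)"
        using sorted_gap2[OF s, of "p' ! t" "p ! j"] x j os by simp
      moreover have "e ! (i + j) < i + j + 1" using ie[of "i+j"] ir jr n by simp
      ultimately show ?thesis using os wj[OF jr] j by simp
    next
      case False
      then obtain j where j: "t < j" "j < r" "x = int (p ! j) - int j + int t"
        using x(1) unfolding S_def r_def by auto
      have os: "p ! j < length L \<and> L ! (p ! j) = w ! j"
        using occ_struct[OF red, of j] j r_def unfolding L_def by simp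
      have le: "p' ! t \<le> p ! j" using x j by simp
      have "L ! (p' ! t) + (p ! j - p' ! t) \<le> L ! (p ! j)"
        using sorted_gap2[OF s, of "p' ! t" "p ! j"] le os by simp
      moreover have "e ! (i + j) < i + j + 1" using ie[of "i+j"] ir j n by simp
      ultimately show ?thesis using os wj[OF j(2)] j x le by simp
    qed
  qed
  define c where "c = take i e @ map (\<lambda>k. L ! k) p' @ drop (i + r) e"
  have c: "change p p' e i = c" unfolding change_def c_def L_def w_def r_def Let_def by simp
  have lc: "length c = length e" using ir len r_def unfolding c_def by simp
  have "c ! k < k + 1" if k: "k < length e" for k
  proof (cases "k < i")
    case True
    then show ?thesis using ie[of k] k n ir unfolding c_def by (simp add: nth_append)
  next
    case False
    show ?thesis
    proof (cases "k < i + r")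
      case True
      then obtain t where t: "k = i + t" "t < r" using False by (metis add_diff_inverse_nat add_less_cancel_left)
      have "c ! k = L ! (p' ! t)" using t ir len r_def unfolding c_def by (simp add: nth_append)
      then show ?thesis using key[OF t(2)] t by simp
    next
      case F2: False
      have "\<not> k - i < length p'" using F2 len r_def by arith
      then have "c ! k = e ! k" using F2 False ir len r_def k unfolding c_def by (simp add: nth_append)
      then show ?thesis using ie[of k] k n by simp
    qed
  qed
  then show ?thesis unfolding valid_change_def inv_seq_def c using lc by simp
qed

lemma card_strict_mono:
  fixes f :: "nat \<Rightarrow> nat"
  assumes sm: "\<And>a b. a < b \<Longrightarrow> b \<le> d \<Longrightarrow> f a < f b" and x: "x \<le> d"
  shows "card {y \<in> f ` {..d}. y < f x} = x"
proof -
  have eq: "{y \<in> f ` {..d}. y < f x} = f ` {..<x}"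
  proof
    show "{y \<in> f ` {..d}. y < f x} \<subseteq> f ` {..<x}"
    proof
      fix y assume "y \<in> {y \<in> f ` {..d}. y < f x}"
      then obtain m where m: "m \<le> d" "y = f m" "f m < f x" by auto
      have "m < x"
      proof (rule ccontr)
        assume "\<not> m < x"
        then have "x = m \<or> x < m" by auto
        then show False using sm[of x m] m by auto
      qed
      with m show "y \<in> f ` {..<x}" by auto
    qed
  next
    show "f ` {..<x} \<subseteq> {y \<in> f ` {..d}. y < f x}"
      using x sm by auto
  qed
  have "inj_on f {..<x}"
  proof (rule inj_onI)
    fix a b assume "a \<in> {..<x}" "b \<in> {..<x}" "f a = f b"
    then show "a = b" using sm[of a b] sm[of b a] x by (metis lessThan_iff linorder_neqE_nat less_imp_le_nat order.strict_trans2 less_irrefl)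
  qed
  then show ?thesis using eq card_image by fastforce
qed

lemma bwd:
  fixes p p' :: "nat list"
  assumes pat: "is_pattern p" and len: "length p = length p'"
    and mx: "Max (set p) = Max (set p')"
    and notch: "\<not> changeable p p'"
  shows "\<exists>n e i. inv_seq n e \<and> occurs_at p e i \<and> \<not> valid_change p p' e i"
proof -
  define r where "r = length p"
  obtain t where t: "t < r" and
    lt: "\<not> int (p' ! t) \<le> Max ({int (p ! j) | j. j \<le> t} \<union>
                        {int (p ! j) - int j + int t | j. t < j \<and> j < length p})"
    using notch unfolding changeable_def r_def by auto
  define S where "S = {int (p ! j) | j. j \<le> t} \<union>
                        {int (p ! j) - int j + int t | j. t < j \<and> j < length p}"
  have fin: "finite S" unfolding S_def by auto
  have "int (p ! 0) \<in> S" unfolding S_def by auto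
  then have Sne: "S \<noteq> {}" by auto
  have "Max S < int (p' ! t)" using lt unfolding S_def[symmetric] by simp
  then have allS: "\<forall>x\<in>S. x < int (p' ! t)" using Max_less_iff[OF fin Sne] by blast
  have hA: "p ! j < p' ! t" if "j \<le> t" for j
  proof -
    have "int (p ! j) \<in> S" unfolding S_def using that by auto
    then show ?thesis using allS by auto
  qed
  have hB: "\<And>j. t < j \<Longrightarrow> j < r \<Longrightarrow> p ! j + t < p' ! t + j"
  proof -
    fix j assume "t < j" "j < r"
    then have "int (p ! j) - int j + int t \<in> S" unfolding S_def r_def by auto
    then show "p ! j + t < p' ! t + j" using allS by auto
  qed
  have ne: "p \<noteq> []" using t r_def by auto
  define d where "d = Max (set p)"
  have pr: "\<And>j. j < r \<Longrightarrow> p ! j < r" using pat unfolding is_pattern_def r_def by auto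
  obtain jd where jd: "jd < r" "p ! jd = d"
    using Max_in[of "set p"] ne unfolding d_def r_def by (auto simp: in_set_conv_nth)
  define F where "F = (\<lambda>v. (\<lambda>j. r + j + v - p ! j) ` {j. j < r \<and> v \<le> p ! j})"
  define f where "f = (\<lambda>v. Min (F v))"
  have Ffin: "finite (F v)" for v unfolding F_def by auto
  have Fne: "F v \<noteq> {}" if "v \<le> d" for v using jd that unfolding F_def by auto
  have fin_F: "f v \<in> F v" if "v \<le> d" for v unfolding f_def using Min_in[OF Ffin Fne[OF that]] .
  have fle: "f v \<le> r + j + v - p ! j" if "j < r" "v \<le> p ! j" for v j
    unfolding f_def using Min_le[OF Ffin] that unfolding F_def by auto
  have sm: "f a < f b" if ab: "a < b" "b \<le> d" for a b
  proof -
    obtain j where j: "j < r" "b \<le> p ! j" "f b = r + j + b - p ! j"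
      using fin_F[OF ab(2)] unfolding F_def by auto
    have "f a \<le> r + j + a - p ! j" using fle[of j a] j ab by simp
    then show ?thesis using j ab pr[OF j(1)] by simp
  qed
  have f1: "f (p ! j) \<le> r + j" if "j < r" for j using fle[OF that order.refl] pr[OF that] by simp
  have ptd: "p' ! t \<le> d" using t len r_def mx unfolding d_def by simp
  have f2: "r + t < f (p' ! t)"
  proof -
    obtain j where j: "j < r" "p' ! t \<le> p ! j" "f (p' ! t) = r + j + p' ! t - p ! j"
      using fin_F[OF ptd] unfolding F_def by auto
    have "t < j" using hA[of j] j by (meson leI leD)
    then have "p ! j + t < p' ! t + j" using hB j by simp
    then show ?thesis using j pr[OF j(1)] by simp
  qed
  have setp: "set p = {..d}"
  proof
    show "set p \<subseteq> {..d}" unfolding d_def using ne by auto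
    show "{..d} \<subseteq> set p" using pattern_downclosed[OF pat ne] unfolding d_def by auto
  qed
  define w where "w = map f p"
  define e where "e = replicate r 0 @ w"
  have lw: "length w = r" unfolding w_def r_def by simp
  have inv: "inv_seq (r + r) e"
    unfolding inv_seq_def
  proof (intro conjI allI impI)
    show "length e = r + r" unfolding e_def using lw by simp
    fix k assume k: "k < r + r"
    show "e ! k < k + 1"
    proof (cases "k < r")
      case True then show ?thesis unfolding e_def by (simp add: nth_append)
    next
      case False
      then obtain j where j: "k = r + j" "j < r" using k by (metis add_diff_inverse_nat add_less_cancel_left)
      have "e ! k = f (p ! j)" unfolding e_def w_def using j r_def by (simp add: nth_append)
      then show ?thesis using f1[OF j(2)] j by simp
    qed
  qed
  have tw: "take (length p) (drop r e) = w" unfolding e_def using lw r_def by simp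
  have red: "reduction w = p"
  proof -
    have "reduction w = map (\<lambda>x. card {y \<in> f ` {..d}. y < f x}) p"
      unfolding reduction_def w_def using setp by (simp add: image_image)
    also have "\<dots> = map (\<lambda>x. x) p"
      using card_strict_mono[OF sm] setp by (intro map_cong) auto
    finally show ?thesis by simp
  qed
  have occ: "occurs_at p e r" unfolding occurs_at_def using tw red inv unfolding inv_seq_def r_def by (simp only:) simp
  have "p' ! t \<in> set p" using ptd setp by auto
  then obtain j where j: "j < r" "p ! j = p' ! t" unfolding r_def by (auto simp: in_set_conv_nth)
  define L where "L = sorted_list_of_set (set w)"
  have Lj: "L ! (p' ! t) = f (p' ! t)"
    using occ_struct[OF red, of j] j r_def unfolding L_def w_def by simp
  have "change p p' e r ! (r + t) = L ! (p' ! t)"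
    unfolding change_def Let_def tw L_def[symmetric] using t len r_def
    by (simp add: nth_append e_def)
  then have "\<not> change p p' e r ! (r + t) < r + t + 1" using Lj f2 by simp
  moreover have "r + t < length e" unfolding e_def using lw t by simp
  ultimately have "\<not> valid_change p p' e r" unfolding valid_change_def inv_seq_def by auto
  then show ?thesis using inv occ by blast
qed

theorem mainTheorem4:
  fixes p p' :: "nat list"
  assumes "is_pattern p" and "is_pattern p'"
    and "length p = length p'"
    and "p ! 0 = p' ! 0"
    and "p ! (length p - 1) = p' ! (length p' - 1)"
    and "Max (set p) = Max (set p')"
  shows "changeable p p' \<longleftrightarrow>
    (\<forall>n e i. inv_seq n e \<longrightarrow> occurs_at p e i \<longrightarrow> valid_change p p' e i)"
  using fwd[OF _ assms(3) assms(6)] bwd[OF assms(1) assms(3) assms(6)] by blast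

end
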